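(* Let $k,k_1,\dots,k_N\in\mathbb{R}^3$, $t,t_1,\dots,t_N\in\mathbb{R}$, $\varepsilon_1,\dots,\varepsilon_N\in\{0,1\}$, and write $a^{0}_\lambda=a_\lambda$, $a^{1}_\lambda=a^{\dagger}_\lambda$. Let $m_1<\dots<m_J$ be the positions $m$ with $\varepsilon_m=0$ (annihilators) and $m'_1<\dots<m'_I$ the positions with $\varepsilon_m=1$ (creators), $I+J=N$. Then $$ a_\lambda(t,k)\,a^{\varepsilon_1}_\lambda(t_1,k_1)\cdots a^{\varepsilon_N}_\lambda(t_N,k_N) -\prod_{i=1}^{J} q_{\lambda}^{-1}(t-t_{m_i},k\cdot k_{m_i})\prod_{j=1}^{I} q_{\lambda}(t-t_{m'_j},k\cdot k_{m'_j})\, a^{\varepsilon_1}_\lambda(t_1,k_1)\cdots a^{\varepsilon_N}_\lambda(t_N,k_N)\,a_\lambda(t,k) $$ $$ =\sum_{j=1}^{I}\delta(k-k_{m'_j})\,\frac{1}{\lambda^2}\,q_{\lambda}\big(t-t_{m'_j},\tilde\omega(k)+k\cdot p\big)\prod_{m_i<m'_j}q_{\lambda}(t-t_{m'_j},k\cdot k_{m_i})\prod_{m'_i<m'_j}q^{-1}_{\lambda}(t-t_{m'_j},k\cdot k_{m'_i}) $$ $$ \times\prod_{m_i<m'_j}q_{\lambda}^{-1}(t-t_{m_i},k\cdot k_{m_i})\prod_{m'_i<m'_j}q_{\lambda}(t-t_{m'_i},k\cdot k_{m'_i})\; a^{\varepsilon_1}_\lambda(t_1,k_1)\cdots\widehat{a^{\dagger}_\lambda(t_{m'_j},k_{m'_j})}\cdots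 a^{\varepsilon_N}_\lambda(t_N,k_N), $$ where the hat means that the factor $a^{\dagger}_\lambda(t_{m'_j},k_{m'_j})$ is omitted from the product, and the operator-valued factors depending on $p$ stand to the left of the product of field operators.
   Context: A single non-relativistic particle in $\mathbb{R}^3$ has position $q=(q_1,q_2,q_3)$ and momentum $p=(p_1,p_2,p_3)$ with $[q_j,p_n]=i\delta_{jn}$. A boson field is given by operators $a_j(k),a_j^\dagger(k)$, $j=1,2,3$, $k\in\mathbb{R}^3$, with $[a_j(k),a_n^\dagger(k')]=\delta_{jn}\delta(k-k')$, $[a_j(k),a_n(k')]=0$. Let $\omega(k)=|k|$, $\tilde\omega(k)=\omega(k)+\tfrac12 k^2$, $H_0=\int\omega(k)a^\dagger(k)a(k)\,d^3k+\tfrac12 p^2$, and $kq=\sum_j k_jq_j$, $k\cdot p=\sum_j k_jp_j$. For $\lambda>0$ define the rescaled (collective) field operators $$a_{\lambda}(t,k)=\frac{1}{\lambda}e^{i\frac{t}{\lambda^2}H_0}e^{-ikq}a(k)e^{-i\frac{t}{\lambda^2}H_0}=\frac{1}{\lambda}e^{-i\frac{t}{\lambda^2}(\tilde\omega(k)+k\cdot p)}e^{-ikq}a(k),$$ and $a^\dagger_\lambda(t,k)$ its adjoint, and $q_\lambda(t,x)=e^{-i\frac{t}{\lambda^2}x}$ (where $x$ may be a function of the operator $p$). Polarization indices are suppressed: each field operator carries an index $j\in\{1,2,3\}$ and each $\delta(k-k')$ pairing an annihilator with index $j$ and a creator with index $n$ stands for $\delta(k-k')\delta_{jn}$. *)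

theory Defs
  imports "HOL-Analysis.Analysis"
begin

text \<open>Operators live in an abstract, non-commutative ring with unit 'A.
  F f  is the operator f(p) (functional calculus of the momentum p, f : R^3 -> C),
  W k  is e^{-ikq}, b j k is a_j(k), bd j k is a_j^dagger(k), and
  D k k' is the (central, c-number) distribution delta(k-k').\<close>

definition omega_t :: "real^3 \<Rightarrow> real" where
  "omega_t k = norm k + (norm k)^2 / 2"

definition qsc :: "real \<Rightarrow> real \<Rightarrow> real \<Rightarrow> complex" where
  "qsc lam t x = exp (- \<i> * complex_of_real (t / lam^2 * x))"

definition ccr_model ::
  "((real^3 \<Rightarrow> complex) \<Rightarrow> 'A::ring_1) \<Rightarrow> (real^3 \<Rightarrow> 'A) \<Rightarrow>
   (3 \<Rightarrow> real^3 \<Rightarrow> 'A) \<Rightarrow> (3 \<Rightarrow> real^3 \<Rightarrow> 'A) \<Rightarrow> (real^3 \<Rightarrow> real^3 \<Rightarrow> 'A) \<Rightarrow> bool" where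
  "ccr_model F W b bd D \<longleftrightarrow>
     \<comment> \<open>functional calculus of p is a unital ring homomorphism\<close>
     (\<forall>f g. F (\<lambda>P. f P * g P) = F f * F g) \<and>
     (\<forall>f g. F (\<lambda>P. f P + g P) = F f + F g) \<and>
     F (\<lambda>P. 1) = 1 \<and>
     \<comment> \<open>e^{-ikq} is a unitary group with e^{-ikq} f(p) = f(p+k) e^{-ikq}\<close>
     W 0 = 1 \<and>
     (\<forall>k k'. W (k + k') = W k * W k') \<and>
     (\<forall>k f. W k * F f = F (\<lambda>P. f (P + k)) * W k) \<and>
     \<comment> \<open>particle operators commute with field operators\<close>
     (\<forall>k j k'. W k * b j k' = b j k' * W k) \<and>
     (\<forall>k j k'. W k * bd j k' = bd j k' * W k) \<and>
     (\<forall>f j k. F f * b j k = b j k * F f) \<and>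
     (\<forall>f j k. F f * bd j k = bd j k * F f) \<and>
     \<comment> \<open>canonical commutation relations\<close>
     (\<forall>j k n k'. b j k * bd n k' - bd n k' * b j k = (if j = n then D k k' else 0)) \<and>
     (\<forall>j k n k'. b j k * b n k' = b n k' * b j k) \<and>
     (\<forall>j k n k'. bd j k * bd n k' = bd n k' * bd j k) \<and>
     \<comment> \<open>delta(k-k') is a c-number supported on k = k'\<close>
     (\<forall>k k' X. D k k' * X = X * D k k') \<and>
     (\<forall>k k' G. D k k' * G k' = D k k' * G k)"

definition aL ::
  "((real^3 \<Rightarrow> complex) \<Rightarrow> 'A::ring_1) \<Rightarrow> (real^3 \<Rightarrow> 'A) \<Rightarrow> (3 \<Rightarrow> real^3 \<Rightarrow> 'A) \<Rightarrow>
   real \<Rightarrow> real \<Rightarrow> real^3 \<Rightarrow> 3 \<Rightarrow> 'A" where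
  "aL F W b lam t k j =
     F (\<lambda>P. complex_of_real (1 / lam)) * F (\<lambda>P. qsc lam t (omega_t k + k \<bullet> P)) * W k * b j k"

definition adL ::
  "((real^3 \<Rightarrow> complex) \<Rightarrow> 'A::ring_1) \<Rightarrow> (real^3 \<Rightarrow> 'A) \<Rightarrow> (3 \<Rightarrow> real^3 \<Rightarrow> 'A) \<Rightarrow>
   real \<Rightarrow> real \<Rightarrow> real^3 \<Rightarrow> 3 \<Rightarrow> 'A" where
  "adL F W bd lam t k j =
     F (\<lambda>P. complex_of_real (1 / lam)) * bd j k * W (- k) *
     F (\<lambda>P. inverse (qsc lam t (omega_t k + k \<bullet> P)))"

text \<open>a^eps_lambda: eps = True means creator (eps = 1), False annihilator (eps = 0).\<close>
definition fop ::
  "((real^3 \<Rightarrow> complex) \<Rightarrow> 'A::ring_1) \<Rightarrow> (real^3 \<Rightarrow> 'A) \<Rightarrow> (3 \<Rightarrow> real^3 \<Rightarrow> 'A) \<Rightarrow>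
   (3 \<Rightarrow> real^3 \<Rightarrow> 'A) \<Rightarrow> real \<Rightarrow> bool \<Rightarrow> real \<Rightarrow> real^3 \<Rightarrow> 3 \<Rightarrow> 'A" where
  "fop F W b bd lam eps t k j = (if eps then adL F W bd lam t k j else aL F W b lam t k j)"

end

theory Submission imports Defs begin

lemma qsc_add: "qsc l t (x + y) = qsc l t x * qsc l t y"
  unfolding qsc_def exp_add[symmetric] by (rule arg_cong[where f=exp]) (simp add: algebra_simps add_divide_distrib)
lemma qsc_tadd: "qsc l (t1 + t2) x = qsc l t1 x * qsc l t2 x"
  unfolding qsc_def exp_add[symmetric] by (rule arg_cong[where f=exp]) (simp add: algebra_simps add_divide_distrib)
lemma qsc_nz: "qsc l t x \<noteq> 0" by (simp add: qsc_def)
lemma qsc_inv: "inverse (qsc l t x) = qsc l (- t) x"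
  by (simp add: qsc_def exp_minus[symmetric])
lemma qsc_inv2: "inverse (qsc l t x) = qsc l t (- x)"
  by (simp add: qsc_def exp_minus[symmetric])
lemma qsc_neg: "qsc l t (- x) = inverse (qsc l t x)" by (simp add: qsc_inv2)
lemma qsc_xdiff: "qsc l t (x - y) = qsc l t x * inverse (qsc l t y)"
  using qsc_add[of l t x "-y"] by (simp add: qsc_neg)
lemma qsc_sum: "qsc l t (sum f {..<(N::nat)}) = (\<Prod>m<N. qsc l t (f m))"
  by (induction N) (simp_all add: qsc_add, simp add: qsc_def)
lemma qsc_diff: "qsc l (t1 - t2) x = qsc l t1 x * inverse (qsc l t2 x)"
  using qsc_tadd[of l t1 "-t2" x] by (simp add: qsc_inv)

context
  fixes F :: "(real^3 \<Rightarrow> complex) \<Rightarrow> 'A::ring_1" and W b bd D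
  assumes M: "ccr_model F W b bd D"
begin

lemma Fmul: "F f * F g = F (\<lambda>P. f P * g P)" using M by (simp add: ccr_model_def)
lemma Fmul_assoc: "F f * (F g * X) = F (\<lambda>P. f P * g P) * X" by (simp add: Fmul flip: mult.assoc)
lemma Fone: "F (\<lambda>P. 1) = 1" using M by (simp add: ccr_model_def)
lemma WF: "W k * F f = F (\<lambda>P. f (P + k)) * W k" using M by (simp add: ccr_model_def)
lemma WF_assoc: "W k * (F f * X) = F (\<lambda>P. f (P + k)) * (W k * X)" by (simp add: WF flip: mult.assoc)
lemma WW: "W k * W k' = W (k + k')" using M by (simp add: ccr_model_def)
lemma WW_assoc: "W k * (W k' * X) = W (k + k') * X" by (simp add: WW flip: mult.assoc)
lemma W0: "W 0 = 1" using M by (simp add: ccr_model_def)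
lemma bF: "b j k * F f = F f * b j k" using M by (simp add: ccr_model_def)
lemma bF_assoc: "b j k * (F f * X) = F f * (b j k * X)" by (simp add: bF flip: mult.assoc)
lemma bdF: "bd j k * F f = F f * bd j k" using M by (simp add: ccr_model_def)
lemma bdF_assoc: "bd j k * (F f * X) = F f * (bd j k * X)" by (simp add: bdF flip: mult.assoc)
lemma bW: "b j k * W k' = W k' * b j k" using M by (simp add: ccr_model_def)
lemma bW_assoc: "b j k * (W k' * X) = W k' * (b j k * X)" by (simp add: bW flip: mult.assoc)
lemma Wbd: "W k * bd j k' = bd j k' * W k" using M by (simp add: ccr_model_def)
lemma Wbd_assoc: "W k * (bd j k' * X) = bd j k' * (W k * X)" by (simp add: Wbd flip: mult.assoc)
lemma bb: "b j k * b n k' = b n k' * b j k" using M by (simp add: ccr_model_def)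
lemma bbd: "b j k * bd n k' = bd n k' * b j k + (if j = n then D k k' else 0)"
  using M by (simp add: ccr_model_def algebra_simps)
lemma Dc: "D k k' * X = X * D k k'" using M unfolding ccr_model_def by blast
lemma DG: "D k k' * G k' = D k k' * G k" using M unfolding ccr_model_def by blast

lemmas norm = mult.assoc Fmul_assoc Fmul WF_assoc WF WW_assoc WW bF_assoc bF bdF_assoc bdF
  bW_assoc bW Wbd_assoc Wbd

lemma comm_ann: "aL F W b lam t k j * aL F W b lam t' k' j' =
   F (\<lambda>P. inverse (qsc lam (t - t') (k \<bullet> k'))) * aL F W b lam t' k' j' * aL F W b lam t k j"
  apply (simp only: aL_def norm)
  apply (subst bb, subst add.commute[of k' k])
  apply (rule arg_cong2[where f="(*)"], rule arg_cong[where f=F], rule ext, simp_all)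
  apply (simp add: inner_add_right qsc_add qsc_diff inner_commute qsc_nz field_simps)
  done

lemma bbd_assoc: "b j k * (bd n k' * X) = bd n k' * (b j k * X) + (if j = n then D k k' else 0) * X"
  by (simp add: bbd distrib_right flip: mult.assoc)
lemma Fdel_assoc: "F f * ((if c then D a a' else 0) * X) = (if c then D a a' else 0) * (F f * X)"
  using Dc by (simp flip: mult.assoc)
lemma Wdel_assoc: "W k * ((if c then D a a' else 0) * X) = (if c then D a a' else 0) * (W k * X)"
  using Dc by (simp flip: mult.assoc)

lemma comm_cre: "aL F W b lam t k j * adL F W bd lam t' k' j' =
   F (\<lambda>P. qsc lam (t - t') (k \<bullet> k')) * adL F W bd lam t' k' j' * aL F W b lam t k j
   + (if j = j' then D k k' else 0) * F (\<lambda>P. complex_of_real (1 / lam^2))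
     * F (\<lambda>P. qsc lam (t - t') (omega_t k + k \<bullet> P))"
  apply (simp only: aL_def adL_def norm bbd_assoc distrib_left distrib_right Fdel_assoc Wdel_assoc)
  apply (rule arg_cong2[where f="(+)"])
  subgoal
   apply (subst add.commute[of "- k'" k])
   apply (rule arg_cong2[where f="(*)"], rule arg_cong[where f=F], rule ext, simp_all)
   apply (simp add: inner_add_right inner_diff_right qsc_add qsc_xdiff qsc_diff qsc_neg inner_commute qsc_nz field_simps)
    done
  apply (cases "j = j'")
   prefer 2 apply simp
  subgoal premises jj
  proof -
    let ?G = "\<lambda>x. F (\<lambda>P. complex_of_real (1 / lam) *
             (qsc lam t (omega_t k + k \<bullet> P) *
              (complex_of_real (1 / lam) *
               inverse (qsc lam t' (omega_t x + x \<bullet> (P + k + - x)))))) * W (k + - x)"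
    have "D k k' * ?G k' = D k k' * ?G k" by (rule DG)
    also have "?G k = F (\<lambda>P. complex_of_real (1 / lam\<^sup>2) * qsc lam (t - t') (omega_t k + k \<bullet> P))"
      apply (simp add: W0)
      apply (rule arg_cong[where f=F], rule ext)
      apply (simp add: qsc_diff power2_eq_square)
      done
    finally show ?thesis using jj by simp
  qed
  done

lemma shift_aL: "aL F W b lam t k j * F g = F (\<lambda>P. g (P + k)) * aL F W b lam t k j"
  apply (simp only: aL_def norm)
  apply (rule arg_cong2[where f="(*)"], rule arg_cong[where f=F], rule ext)
  apply (simp_all add: mult_ac)
  done

lemma shift_adL: "adL F W bd lam t k j * F g = F (\<lambda>P. g (P - k)) * adL F W bd lam t k j"
  apply (simp only: adL_def norm)
  apply (rule arg_cong2[where f="(*)"], rule arg_cong[where f=F], rule ext)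
  apply (simp_all add: mult_ac)
  done

lemma shift_fop: "fop F W b bd lam e t k j * F g =
   F (\<lambda>P. g (P + (if e then - k else k))) * fop F W b bd lam e t k j"
  by (simp add: fop_def shift_aL shift_adL)

lemma comm_fop: "aL F W b lam t k j * fop F W b bd lam e t' k' j' =
   F (\<lambda>P. if e then qsc lam (t - t') (k \<bullet> k') else inverse (qsc lam (t - t') (k \<bullet> k')))
     * fop F W b bd lam e t' k' j' * aL F W b lam t k j
   + (if e then (if j = j' then D k k' else 0) * F (\<lambda>P. complex_of_real (1 / lam^2))
     * F (\<lambda>P. qsc lam (t - t') (omega_t k + k \<bullet> P)) else 0)"
  by (cases e) (simp_all add: fop_def comm_cre comm_ann)

lemma shift_prod:
  "prod_list (map (\<lambda>m. fop F W b bd lam (es m) (ts m) (ks m) (js m)) [0..<N]) * F g =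
   F (\<lambda>P. g (P + (\<Sum>m<N. if es m then - ks m else ks m)))
   * prod_list (map (\<lambda>m. fop F W b bd lam (es m) (ts m) (ks m) (js m)) [0..<N])"
proof (induction N arbitrary: g)
  case 0
  then show ?case by (simp add: Fone)
next
  case (Suc N)
  show ?case
    by (simp add: mult.assoc shift_fop Suc.IH add.assoc add.commute[of "if es N then - ks N else ks N"]
        flip: mult.assoc[of "prod_list _"])
qed

lemma Fconst_comm_prod:
  "F (\<lambda>P. c) * prod_list (map (\<lambda>m. fop F W b bd lam (es m) (ts m) (ks m) (js m)) [0..<N]) =
   prod_list (map (\<lambda>m. fop F W b bd lam (es m) (ts m) (ks m) (js m)) [0..<N]) * F (\<lambda>P. c)"
  by (simp add: shift_prod)

lemma del_comm: "(if c then D a a' else 0) * X = X * (if c then D a a' else 0)"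
  using Dc by simp

lemma main_ind:
  fixes es ts ks js and lam t :: real and k :: "real^3" and j :: 3 and A s sh R
  assumes A_def: "A = (\<lambda>m. fop F W b bd lam (es m) (ts m) (ks m) (js m))"
  and s_def: "s = (\<lambda>m. if es m then qsc lam (t - ts m) (k \<bullet> ks m) else inverse (qsc lam (t - ts m) (k \<bullet> ks m)))"
  and sh_def: "sh = (\<lambda>m. if es m then - ks m else ks m)"
  and R_def: "R = (\<lambda>c n. (if j = js c then D k (ks c) else 0) * F (\<lambda>P. complex_of_real (1 / lam^2))
     * F (\<lambda>P. qsc lam (t - ts c) (omega_t k + k \<bullet> P))
     * F (\<lambda>P. (\<Prod>m<c. qsc lam (t - ts c) (k \<bullet> sh m)) * (\<Prod>m<c. s m))
     * prod_list (map A (filter (\<lambda>m. m \<noteq> c) [0..<n])))"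
  shows "aL F W b lam t k j * prod_list (map A [0..<N])
     - F (\<lambda>P. \<Prod>m<N. s m) * prod_list (map A [0..<N]) * aL F W b lam t k j
     = (\<Sum>c<N. if es c then R c N else 0)"
proof (induction N)
  case 0
  then show ?case by (simp add: Fone)
next
  case (Suc N)
  define X where "X = aL F W b lam t k j"
  define PN where "PN = prod_list (map A [0..<N])"
  define E where "E = (if es N then (if j = js N then D k (ks N) else 0) * F (\<lambda>P. complex_of_real (1 / lam^2))
     * F (\<lambda>P. qsc lam (t - ts N) (omega_t k + k \<bullet> P)) else 0)"
  define Sg where "Sg = (\<Sum>c<N. if es c then R c N else 0)"
  have IH: "X * PN = F (\<lambda>P. \<Prod>m<N. s m) * PN * X + Sg"
    using Suc.IH unfolding X_def PN_def Sg_def by (simp add: algebra_simps)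
  have C: "X * A N = F (\<lambda>P. s N) * A N * X + E"
    unfolding X_def A_def s_def E_def by (rule comm_fop)
  have P1: "prod_list (map A [0..<Suc N]) = PN * A N" by (simp add: PN_def)
  have shP: "PN * F g = F (\<lambda>P. g (P + sum sh {..<N})) * PN" for g
    unfolding PN_def A_def sh_def by (rule shift_prod)
  have ccP: "F (\<lambda>P. c) * PN = PN * F (\<lambda>P. c)" for c
    unfolding PN_def A_def by (rule Fconst_comm_prod)
  have Rs: "R c (Suc N) = R c N * A N" if "c < N" for c
    using that by (simp add: R_def mult.assoc)
  have RN: "F (\<lambda>P. \<Prod>m<N. s m) * PN * E = (if es N then R N (Suc N) else 0)"
  proof (cases "es N")
    case False
    then show ?thesis by (simp add: E_def)
  next
    case True
    have sc: "\<And>P. qsc lam (t - ts N) (omega_t k + k \<bullet> (P + sum sh {..<N})) = qsc lam (t - ts N) (omega_t k + k \<bullet> P) * (\<Prod>m<N. qsc lam (t - ts N) (k \<bullet> sh m))"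
      by (simp add: inner_add_right inner_sum_right qsc_add qsc_sum)
    define dl where "dl = (if j = js N then D k (ks N) else 0)"
    have "F (\<lambda>P. \<Prod>m<N. s m) * PN * E
      = dl * (F (\<lambda>P. \<Prod>m<N. s m) * (F (\<lambda>P. complex_of_real (1 / lam^2)) * (PN
          * F (\<lambda>P. qsc lam (t - ts N) (omega_t k + k \<bullet> P)))))"
    proof -
      have e1: "PN * dl = dl * PN" unfolding dl_def by (rule del_comm[symmetric])
      have e2: "F (\<lambda>P. \<Prod>m<N. s m) * dl = dl * F (\<lambda>P. \<Prod>m<N. s m)"
        unfolding dl_def by (rule del_comm[symmetric])
      have e3: "PN * F (\<lambda>P. complex_of_real (1 / lam^2)) = F (\<lambda>P. complex_of_real (1 / lam^2)) * PN"
        by (rule ccP[symmetric])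
      have "E = dl * F (\<lambda>P. complex_of_real (1 / lam^2)) * F (\<lambda>P. qsc lam (t - ts N) (omega_t k + k \<bullet> P))"
        unfolding E_def dl_def using True by simp
      then have "F (\<lambda>P. \<Prod>m<N. s m) * PN * E = F (\<lambda>P. \<Prod>m<N. s m) * (PN * dl) * (F (\<lambda>P. complex_of_real (1 / lam^2)) * F (\<lambda>P. qsc lam (t - ts N) (omega_t k + k \<bullet> P)))"
        by (simp only: mult.assoc)
      also have "\<dots> = (F (\<lambda>P. \<Prod>m<N. s m) * dl) * (PN * F (\<lambda>P. complex_of_real (1 / lam^2))) * F (\<lambda>P. qsc lam (t - ts N) (omega_t k + k \<bullet> P))"
        unfolding e1 by (simp only: mult.assoc)
      also have "\<dots> = dl * (F (\<lambda>P. \<Prod>m<N. s m) * (F (\<lambda>P. complex_of_real (1 / lam^2)) * (PN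
          * F (\<lambda>P. qsc lam (t - ts N) (omega_t k + k \<bullet> P)))))"
        unfolding e2 e3 by (simp only: mult.assoc)
      finally show ?thesis .
    qed
    also have "\<dots> = dl * (F (\<lambda>P. \<Prod>m<N. s m) * (F (\<lambda>P. complex_of_real (1 / lam^2)) * (
          F (\<lambda>P. qsc lam (t - ts N) (omega_t k + k \<bullet> (P + sum sh {..<N}))) * PN)))"
      by (simp add: shP)
    also have "\<dots> = R N (Suc N)"
      unfolding R_def dl_def
      using sc by (simp add: PN_def mult.assoc Fmul_assoc Fmul mult_ac)
    finally show ?thesis using True by simp
  qed
  have "X * (PN * A N) = F (\<lambda>P. \<Prod>m<N. s m) * PN * (X * A N) + Sg * A N"
    by (simp add: IH distrib_right flip: mult.assoc)
  also have "\<dots> = F (\<lambda>P. \<Prod>m<N. s m) * (PN * F (\<lambda>P. s N)) * A N * X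
      + F (\<lambda>P. \<Prod>m<N. s m) * PN * E + Sg * A N"
    by (simp add: C distrib_left mult.assoc)
  also have "\<dots> = F (\<lambda>P. \<Prod>m<Suc N. s m) * (PN * A N) * X
      + (if es N then R N (Suc N) else 0) + Sg * A N"
    by (simp add: RN flip: ccP) (simp add: Fmul_assoc mult.commute, simp add: mult.assoc)
  finally have "X * (PN * A N) - F (\<lambda>P. \<Prod>m<Suc N. s m) * (PN * A N) * X
     = (if es N then R N (Suc N) else 0) + Sg * A N" by (simp add: algebra_simps)
  moreover have "Sg * A N = (\<Sum>c<N. if es c then R c (Suc N) else 0)"
    unfolding Sg_def sum_distrib_right by (rule sum.cong) (simp_all add: Rs)
  ultimately show ?case unfolding X_def P1 by (simp add: add.commute)
qed

end

theorem lemma2: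
  fixes F :: "(real^3 \<Rightarrow> complex) \<Rightarrow> 'A::ring_1"
    and W :: "real^3 \<Rightarrow> 'A" and b bd :: "3 \<Rightarrow> real^3 \<Rightarrow> 'A"
    and D :: "real^3 \<Rightarrow> real^3 \<Rightarrow> 'A"
    and lam t :: real and k :: "real^3" and j :: 3
    and N :: nat and es :: "nat \<Rightarrow> bool" and ts :: "nat \<Rightarrow> real"
    and ks :: "nat \<Rightarrow> real^3" and js :: "nat \<Rightarrow> 3"
  assumes "ccr_model F W b bd D" and "lam > 0"
  defines "Ann \<equiv> {m. m < N \<and> \<not> es m}" and "Cre \<equiv> {m. m < N \<and> es m}"
    and "A m \<equiv> fop F W b bd lam (es m) (ts m) (ks m) (js m)"
  shows
   "aL F W b lam t k j * prod_list (map A [0..<N])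
    - F (\<lambda>P. (\<Prod>m\<in>Ann. inverse (qsc lam (t - ts m) (k \<bullet> ks m))) *
              (\<Prod>m\<in>Cre. qsc lam (t - ts m) (k \<bullet> ks m)))
      * prod_list (map A [0..<N]) * aL F W b lam t k j
    = (\<Sum>c\<in>Cre.
        (if j = js c then D k (ks c) else 0)
        * F (\<lambda>P. complex_of_real (1 / lam^2))
        * F (\<lambda>P. qsc lam (t - ts c) (omega_t k + k \<bullet> P))
        * F (\<lambda>P. (\<Prod>m\<in>{m\<in>Ann. m < c}. qsc lam (t - ts c) (k \<bullet> ks m))
                * (\<Prod>m\<in>{m\<in>Cre. m < c}. inverse (qsc lam (t - ts c) (k \<bullet> ks m)))
                * (\<Prod>m\<in>{m\<in>Ann. m < c}. inverse (qsc lam (t - ts m) (k \<bullet> ks m)))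
                * (\<Prod>m\<in>{m\<in>Cre. m < c}. qsc lam (t - ts m) (k \<bullet> ks m)))
        * prod_list (map A (filter (\<lambda>m. m \<noteq> c) [0..<N])))"
proof -
  note M = assms(1)
  define s where "s = (\<lambda>m. if es m then qsc lam (t - ts m) (k \<bullet> ks m) else inverse (qsc lam (t - ts m) (k \<bullet> ks m)))"
  define sh where "sh = (\<lambda>m. if es m then - ks m else ks m)"
  define R where "R = (\<lambda>c n. (if j = js c then D k (ks c) else 0) * F (\<lambda>P. complex_of_real (1 / lam^2))
     * F (\<lambda>P. qsc lam (t - ts c) (omega_t k + k \<bullet> P))
     * F (\<lambda>P. (\<Prod>m<c. qsc lam (t - ts c) (k \<bullet> sh m)) * (\<Prod>m<c. s m))
     * prod_list (map A (filter (\<lambda>m. m \<noteq> c) [0..<n])))"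
  have Afun: "A = (\<lambda>m. fop F W b bd lam (es m) (ts m) (ks m) (js m))"
    unfolding A_def by (rule ext) (rule refl)
  have MI: "aL F W b lam t k j * prod_list (map A [0..<N])
     - F (\<lambda>P. \<Prod>m<N. s m) * prod_list (map A [0..<N]) * aL F W b lam t k j
     = (\<Sum>c<N. if es c then R c N else 0)"
    by (rule main_ind[OF M Afun s_def sh_def R_def])
  have setA: "{..<n} \<inter> - {x. es x} = {m. m < n \<and> \<not> es m}" for n by auto
  have setC: "{..<n} \<inter> {x. es x} = {m. m < n \<and> es m}" for n by auto
  have S1: "(\<Prod>m<N. s m) = (\<Prod>m\<in>Ann. inverse (qsc lam (t - ts m) (k \<bullet> ks m))) *
              (\<Prod>m\<in>Cre. qsc lam (t - ts m) (k \<bullet> ks m))"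
    unfolding s_def prod.If_cases[OF finite_lessThan] setA setC Ann_def Cre_def by (rule mult.commute)
  have abcd: "(a*b)*(c*d) = b*a*d*c" for a b c d :: complex by (simp add: mult_ac)
  have qsh: "qsc lam (t - ts c) (k \<bullet> sh m) = (if es m then inverse (qsc lam (t - ts c) (k \<bullet> ks m)) else qsc lam (t - ts c) (k \<bullet> ks m))" for c m
    by (simp add: sh_def qsc_neg)
  have setA2: "{m \<in> Ann. m < c} = {m. m < c \<and> \<not> es m}" if "c < N" for c
    using that unfolding Ann_def by auto
  have setC2: "{m \<in> Cre. m < c} = {m. m < c \<and> es m}" if "c < N" for c
    using that unfolding Cre_def by auto
  have Rc: "R c N = (if j = js c then D k (ks c) else 0)
        * F (\<lambda>P. complex_of_real (1 / lam^2))
        * F (\<lambda>P. qsc lam (t - ts c) (omega_t k + k \<bullet> P))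
        * F (\<lambda>P. (\<Prod>m\<in>{m\<in>Ann. m < c}. qsc lam (t - ts c) (k \<bullet> ks m))
                * (\<Prod>m\<in>{m\<in>Cre. m < c}. inverse (qsc lam (t - ts c) (k \<bullet> ks m)))
                * (\<Prod>m\<in>{m\<in>Ann. m < c}. inverse (qsc lam (t - ts m) (k \<bullet> ks m)))
                * (\<Prod>m\<in>{m\<in>Cre. m < c}. qsc lam (t - ts m) (k \<bullet> ks m)))
        * prod_list (map A (filter (\<lambda>m. m \<noteq> c) [0..<N]))" if "c < N" for c
  proof -
    have "(\<Prod>m<c. qsc lam (t - ts c) (k \<bullet> sh m)) * (\<Prod>m<c. s m)
       = (\<Prod>m\<in>{m\<in>Ann. m < c}. qsc lam (t - ts c) (k \<bullet> ks m))
                * (\<Prod>m\<in>{m\<in>Cre. m < c}. inverse (qsc lam (t - ts c) (k \<bullet> ks m)))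
                * (\<Prod>m\<in>{m\<in>Ann. m < c}. inverse (qsc lam (t - ts m) (k \<bullet> ks m)))
                * (\<Prod>m\<in>{m\<in>Cre. m < c}. qsc lam (t - ts m) (k \<bullet> ks m))"
      unfolding qsh s_def setA2[OF that] setC2[OF that] prod.If_cases[OF finite_lessThan] setA setC
      by (rule abcd)
    then show ?thesis unfolding R_def by (simp only:)
  qed
  have calc: "(\<Sum>c<N. if es c then R c N else 0) = (\<Sum>c\<in>Cre. R c N)"
  proof -
    have e: "Cre = {x\<in>{..<N}. es x}" unfolding Cre_def by auto
    show ?thesis unfolding e by (rule sum.inter_filter[OF finite_lessThan, symmetric])
  qed
  have calc2: "(\<Sum>c\<in>Cre. R c N) = (\<Sum>c\<in>Cre.
        (if j = js c then D k (ks c) else 0)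
        * F (\<lambda>P. complex_of_real (1 / lam^2))
        * F (\<lambda>P. qsc lam (t - ts c) (omega_t k + k \<bullet> P))
        * F (\<lambda>P. (\<Prod>m\<in>{m\<in>Ann. m < c}. qsc lam (t - ts c) (k \<bullet> ks m))
                * (\<Prod>m\<in>{m\<in>Cre. m < c}. inverse (qsc lam (t - ts c) (k \<bullet> ks m)))
                * (\<Prod>m\<in>{m\<in>Ann. m < c}. inverse (qsc lam (t - ts m) (k \<bullet> ks m)))
                * (\<Prod>m\<in>{m\<in>Cre. m < c}. qsc lam (t - ts m) (k \<bullet> ks m)))
        * prod_list (map A (filter (\<lambda>m. m \<noteq> c) [0..<N])))"
    apply (rule sum.cong[OF refl])
    apply (rule Rc)
    apply (simp add: Cre_def)
    done
  show ?thesis unfolding S1[symmetric] by (rule trans[OF MI trans[OF calc calc2]])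
qed

end
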